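(* Let $s\ge 2$ and let $R,r,h$ be positive integers with $R\le r$, and assume $\mathrm{Perf}(s,r,R)\neq\emptyset$. Identify $\mathbb F_q^{s\times(r+h)}$ with $\mathbb F_q^{s\times r}\times\mathbb F_q^{s\times h}$, writing $x=(x',x'')$ (the first $r$ columns and the last $h$ columns). For any function $f:\mathbb F_q^{s\times h}\to\mathrm{Perf}(s,r,R)$, the code $C_f=\{(c',c''): c''\in\mathbb F_q^{s\times h},\ c'\in f(c'')\}$ belongs to $\mathrm{Perf}(s,r+h,R)$. Conversely, every $C\in\mathrm{Perf}(s,r+h,R)$ is of the form $C_f$ for some function $f:\mathbb F_q^{s\times h}\to\mathrm{Perf}(s,r,R)$ (namely $f(c'')=\{c'\in\mathbb F_q^{s\times r}:(c',c'')\in C\}$).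
   Context: $q$ is a prime power, $\mathbb F_q^{s\times n}$ the set of $s\times n$ matrices over $\mathbb F_q$ with rows in $\mathbb F_q^{1\times n}$. For a row $y=(y_1,\dots,y_n)$, the NRT weight is $w(y)=\max\{j: y_j\neq 0\}$ if $y\ne0$ and $w(0)=0$; for a matrix, $w(x)=\sum_i w(x_i)$. The NRT metric is $d(x,y)=w(x-y)$; $B(c,R)=\{x: d(x,c)\le R\}$. A code $C\subseteq\mathbb F_q^{s\times n}$ is $R$-perfect if the balls $B(c,R)$, $c\in C$, are pairwise disjoint and cover $\mathbb F_q^{s\times n}$; non-trivial means $|C|>1$ and $C\ne\mathbb F_q^{s\times n}$. $\mathrm{Perf}(s,n,R)$ denotes the set of non-trivial $R$-perfect codes in $\mathbb F_q^{s\times n}$. *)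

theory Defs
  imports Main
begin

text \<open>The field F_q is modelled by a type variable of class {finite, field}
(every finite field is some F_q, q a prime power). An s x n matrix is a function
nat => nat => 'a (row index i < s, column index j < n, 0-based; column j is
column j+1 of the paper) which vanishes outside {0..<s} x {0..<n}.\<close>

definition mat_space :: "nat \<Rightarrow> nat \<Rightarrow> (nat \<Rightarrow> nat \<Rightarrow> 'a::zero) set" where
  "mat_space s n = {x. \<forall>i j. (s \<le> i \<or> n \<le> j) \<longrightarrow> x i j = 0}"

definition row_weight :: "nat \<Rightarrow> (nat \<Rightarrow> 'a::zero) \<Rightarrow> nat" where
  "row_weight n y = (if \<exists>j<n. y j \<noteq> 0 then Suc (Max {j. j < n \<and> y j \<noteq> 0}) else 0)"

definition nrt_weight :: "nat \<Rightarrow> nat \<Rightarrow> (nat \<Rightarrow> nat \<Rightarrow> 'a::zero) \<Rightarrow> nat" where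
  "nrt_weight s n x = (\<Sum>i<s. row_weight n (x i))"

definition nrt_dist :: "nat \<Rightarrow> nat \<Rightarrow> (nat \<Rightarrow> nat \<Rightarrow> 'a::ab_group_add) \<Rightarrow> (nat \<Rightarrow> nat \<Rightarrow> 'a) \<Rightarrow> nat" where
  "nrt_dist s n x y = nrt_weight s n (\<lambda>i j. x i j - y i j)"

definition nrt_ball :: "nat \<Rightarrow> nat \<Rightarrow> (nat \<Rightarrow> nat \<Rightarrow> 'a::ab_group_add) \<Rightarrow> nat \<Rightarrow> (nat \<Rightarrow> nat \<Rightarrow> 'a) set" where
  "nrt_ball s n c R = {x \<in> mat_space s n. nrt_dist s n x c \<le> R}"

definition perfect_code :: "nat \<Rightarrow> nat \<Rightarrow> nat \<Rightarrow> (nat \<Rightarrow> nat \<Rightarrow> 'a::ab_group_add) set \<Rightarrow> bool" where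
  "perfect_code s n R C \<longleftrightarrow> C \<subseteq> mat_space s n \<and>
     (\<forall>c\<in>C. \<forall>c'\<in>C. c \<noteq> c' \<longrightarrow> nrt_ball s n c R \<inter> nrt_ball s n c' R = {}) \<and>
     (\<Union>c\<in>C. nrt_ball s n c R) = mat_space s n"

definition Perf :: "nat \<Rightarrow> nat \<Rightarrow> nat \<Rightarrow> (nat \<Rightarrow> nat \<Rightarrow> 'a::{finite,field}) set set" where
  "Perf s n R = {C. perfect_code s n R C \<and> 1 < card C \<and> C \<noteq> mat_space s n}"

definition mat_join :: "nat \<Rightarrow> (nat \<Rightarrow> nat \<Rightarrow> 'a) \<Rightarrow> (nat \<Rightarrow> nat \<Rightarrow> 'a) \<Rightarrow> (nat \<Rightarrow> nat \<Rightarrow> 'a)" where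
  "mat_join r c' c'' = (\<lambda>i j. if j < r then c' i j else c'' i (j - r))"

definition code_Cf :: "nat \<Rightarrow> nat \<Rightarrow> nat \<Rightarrow> ((nat \<Rightarrow> nat \<Rightarrow> 'a::zero) \<Rightarrow> (nat \<Rightarrow> nat \<Rightarrow> 'a) set) \<Rightarrow> (nat \<Rightarrow> nat \<Rightarrow> 'a) set" where
  "code_Cf s r h f = {mat_join r c' c'' | c' c''. c'' \<in> mat_space s h \<and> c' \<in> f c''}"

end

theory Submission imports Defs begin

definition lft :: "nat \<Rightarrow> (nat \<Rightarrow> nat \<Rightarrow> 'a::zero) \<Rightarrow> (nat \<Rightarrow> nat \<Rightarrow> 'a)" where
  "lft r x = (\<lambda>i j. if j < r then x i j else 0)"
definition rgt :: "nat \<Rightarrow> (nat \<Rightarrow> nat \<Rightarrow> 'a) \<Rightarrow> (nat \<Rightarrow> nat \<Rightarrow> 'a)" where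
  "rgt r x = (\<lambda>i j. x i (j + r))"

lemma rw_ge: "j < n \<Longrightarrow> y j \<noteq> 0 \<Longrightarrow> Suc j \<le> row_weight n y"
  unfolding row_weight_def by (auto intro!: Max_ge)

lemma rw_le: "(\<And>j. j < n \<Longrightarrow> y j \<noteq> 0 \<Longrightarrow> Suc j \<le> k) \<Longrightarrow> row_weight n y \<le> k"
  unfolding row_weight_def by (auto simp: Max_less_iff Suc_le_eq)

lemma nw_ge: "i < s \<Longrightarrow> row_weight n (x i) \<le> nrt_weight s n x"
  unfolding nrt_weight_def by (rule member_le_sum) auto

lemma finite_mat_space: "finite (mat_space s n :: (nat \<Rightarrow> nat \<Rightarrow> 'a::{finite,zero}) set)"
proof -
  let ?S = "{g :: nat \<times> nat \<Rightarrow> 'a. \<forall>p. (p \<in> {..<s} \<times> {..<n} \<longrightarrow> g p \<in> UNIV) \<and> (p \<notin> {..<s} \<times> {..<n} \<longrightarrow> g p = 0)}"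
  have "finite ?S" by (rule finite_set_of_finite_funs) auto
  hence "finite ((\<lambda>g i j. g (i, j)) ` ?S)" by simp
  moreover have "mat_space s n \<subseteq> (\<lambda>g i j. g (i, j)) ` ?S"
  proof
    fix x :: "nat \<Rightarrow> nat \<Rightarrow> 'a" assume "x \<in> mat_space s n"
    hence "x = (\<lambda>g i j. g (i, j)) (case_prod x)" "case_prod x \<in> ?S"
      by (auto simp: mat_space_def)
    thus "x \<in> (\<lambda>g i j. g (i, j)) ` ?S" by blast
  qed
  ultimately show ?thesis by (rule finite_subset[rotated])
qed

lemma join_space: "a \<in> mat_space s r \<Longrightarrow> b \<in> mat_space s h \<Longrightarrow> mat_join r a b \<in> mat_space s (r + h)"
  unfolding mat_space_def mat_join_def
proof (intro CollectI allI impI)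
  fix i j assume a: "a \<in> {x. \<forall>i j. s \<le> i \<or> r \<le> j \<longrightarrow> x i j = 0}"
    and b: "b \<in> {x. \<forall>i j. s \<le> i \<or> h \<le> j \<longrightarrow> x i j = 0}" and ij: "s \<le> i \<or> r + h \<le> j"
  show "(if j < r then a i j else b i (j - r)) = 0"
  proof (cases "j < r")
    case True thus ?thesis using a ij by auto
  next
    case False
    have "s \<le> i \<or> h \<le> j - r" using ij False by auto
    thus ?thesis using b False by auto
  qed
qed

lemma split_space1: "x \<in> mat_space s (r + h) \<Longrightarrow> lft r x \<in> mat_space s r"
  unfolding mat_space_def lft_def by simp
lemma split_space2: "x \<in> mat_space s (r + h) \<Longrightarrow> rgt r x \<in> mat_space s h"
  unfolding mat_space_def rgt_def by simp
lemma split_space3: "x = mat_join r (lft r x) (rgt r x)"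
  unfolding mat_join_def lft_def rgt_def by (intro ext) simp

lemma rgt_join[simp]: "rgt r (mat_join r a b) = b"
  unfolding mat_join_def rgt_def by (intro ext) simp

lemma lft_join[simp]: "a \<in> mat_space s r \<Longrightarrow> lft r (mat_join r a b) = a"
  unfolding mat_join_def lft_def mat_space_def by (intro ext) simp

lemma box_eq: "b \<in> mat_space s h \<Longrightarrow> c \<in> mat_space s h \<Longrightarrow> (\<forall>i<s. \<forall>j<h. b i j = c i j) \<Longrightarrow> b = c"
proof (intro ext)
  fix i j assume b: "b \<in> mat_space s h" and c: "c \<in> mat_space s h" and e: "\<forall>i<s. \<forall>j<h. b i j = c i j"
  show "b i j = c i j"
  proof (cases "i < s \<and> j < h")
    case True thus ?thesis using e by auto
  next
    case False thus ?thesis using b c unfolding mat_space_def by auto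
  qed
qed

lemma ball_iff: "x \<in> nrt_ball s n c R \<longleftrightarrow> x \<in> mat_space s n \<and> nrt_dist s n x c \<le> R"
  by (simp add: nrt_ball_def)

lemma rw_join0:
  assumes z: "\<And>j. j < h \<Longrightarrow> b j = 0"
  shows "row_weight (r + h) (\<lambda>j. if j < r then a j else b (j - r)) = row_weight r a"
proof -
  have S: "{j. j < r + h \<and> (if j < r then a j else b (j - r)) \<noteq> 0} = {j. j < r \<and> a j \<noteq> 0}"
  proof (intro set_eqI iffI)
    fix j assume "j \<in> {j. j < r + h \<and> (if j < r then a j else b (j - r)) \<noteq> 0}"
    hence j: "j < r + h" "(if j < r then a j else b (j - r)) \<noteq> 0" by auto
    show "j \<in> {j. j < r \<and> a j \<noteq> 0}"
    proof (cases "j < r")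
      case True thus ?thesis using j by auto
    next
      case False hence "j - r < h" using j by auto
      thus ?thesis using j False z by auto
    qed
  qed auto
  have E: "(\<exists>j<r + h. (if j < r then a j else b (j - r)) \<noteq> 0) = (\<exists>j<r. a j \<noteq> 0)"
    using S by blast
  show ?thesis unfolding row_weight_def E S by simp
qed

lemma L:
  fixes x' x'' c' c'' :: "nat \<Rightarrow> nat \<Rightarrow> 'a::ab_group_add"
  assumes "R \<le> r"
  shows "nrt_dist s (r + h) (mat_join r x' x'') (mat_join r c' c'') \<le> R \<longleftrightarrow>
     (\<forall>i<s. \<forall>j<h. x'' i j = c'' i j) \<and> nrt_dist s r x' c' \<le> R"
proof -
  have eq: "(\<lambda>i j. mat_join r x' x'' i j - mat_join r c' c'' i j) =
     (\<lambda>i j. if j < r then x' i j - c' i j else x'' i (j - r) - c'' i (j - r))"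
    unfolding mat_join_def by (intro ext) simp
  show ?thesis
  proof (cases "\<forall>i<s. \<forall>j<h. x'' i j = c'' i j")
    case True
    have "nrt_weight s (r + h) (\<lambda>i j. if j < r then x' i j - c' i j else x'' i (j - r) - c'' i (j - r))
       = nrt_weight s r (\<lambda>i j. x' i j - c' i j)"
      unfolding nrt_weight_def
    proof (rule sum.cong[OF refl])
      fix i assume "i \<in> {..<s}"
      hence z: "\<And>j. j < h \<Longrightarrow> x'' i j - c'' i j = 0" using True by auto
      show "row_weight (r + h) (\<lambda>j. if j < r then x' i j - c' i j else x'' i (j - r) - c'' i (j - r))
          = row_weight r (\<lambda>j. x' i j - c' i j)"
        by (rule rw_join0[where b = "\<lambda>j. x'' i j - c'' i j"]) (rule z)
    qed
    thus ?thesis using True unfolding nrt_dist_def eq by simp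
  next
    case False
    then obtain i j where ij: "i < s" "j < h" "x'' i j \<noteq> c'' i j" by blast
    have "Suc (r + j) \<le> row_weight (r + h) ((\<lambda>i j. if j < r then x' i j - c' i j else x'' i (j - r) - c'' i (j - r)) i)"
      by (rule rw_ge) (use ij in auto)
    also have "\<dots> \<le> nrt_dist s (r + h) (mat_join r x' x'') (mat_join r c' c'')"
      unfolding nrt_dist_def eq by (rule nw_ge) (rule ij)
    finally show ?thesis using False assms by auto
  qed
qed

lemma zero_space: "(\<lambda>i j. 0) \<in> mat_space s n"
  by (simp add: mat_space_def)

lemma nontriv:
  fixes D :: "(nat \<Rightarrow> nat \<Rightarrow> 'a::{finite,field}) set"
  assumes P: "perfect_code s r R D" and s: "2 \<le> s" and R: "0 < R" "R \<le> r"
  shows "1 < card D" "D \<noteq> mat_space s r"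
proof -
  have sub: "D \<subseteq> mat_space s r" and disj: "\<And>c c'. c \<in> D \<Longrightarrow> c' \<in> D \<Longrightarrow> c \<noteq> c' \<Longrightarrow> nrt_ball s r c R \<inter> nrt_ball s r c' R = {}"
    and cov: "(\<Union>c\<in>D. nrt_ball s r c R) = mat_space s r"
    using P unfolding perfect_code_def by auto
  have fin: "finite D" using sub finite_mat_space finite_subset by blast
  obtain a where a: "a \<in> D" using cov zero_space by blast
  have aS: "a \<in> mat_space s r" using a sub by auto
  define x where "x = (\<lambda>i j. if i < s \<and> j < r then a i j + 1 else (0::'a))"
  have xS: "x \<in> mat_space s r" unfolding x_def mat_space_def by auto
  have dx: "(\<lambda>i j. x i j - a i j) = (\<lambda>i j. if i < s \<and> j < r then 1 else 0)"
  proof (intro ext)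
    fix i j show "x i j - a i j = (if i < s \<and> j < r then 1 else 0)"
      using aS unfolding x_def mat_space_def by auto
  qed
  have rows: "r \<le> row_weight r ((\<lambda>i j. if i < s \<and> j < r then (1::'a) else 0) i)" if "i \<in> {..<s}" for i
  proof -
    have "Suc (r - 1) \<le> row_weight r ((\<lambda>i j. if i < s \<and> j < r then (1::'a) else 0) i)"
      by (rule rw_ge) (use that R in auto)
    thus ?thesis using R by simp
  qed
  have "card {..<s} * r \<le> nrt_weight s r (\<lambda>i j. if i < s \<and> j < r then (1::'a) else 0)"
    unfolding nrt_weight_def using sum_bounded_below[of "{..<s}" r, OF rows] by simp
  hence "s * r \<le> nrt_dist s r x a" unfolding nrt_dist_def dx by simp
  moreover have "2 * r \<le> s * r" using s by simp
  ultimately have far: "R < nrt_dist s r x a" using R by linarith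
  obtain b where b: "b \<in> D" "x \<in> nrt_ball s r b R" using cov xS by blast
  have "b \<noteq> a" using b far by (auto simp: ball_iff)
  hence "card {a, b} = 2" by simp
  moreover have "card {a, b} \<le> card D" using a b fin by (intro card_mono) auto
  ultimately show "1 < card D" by simp
  show "D \<noteq> mat_space s r"
  proof
    assume eqD: "D = mat_space s r"
    define e :: "nat \<Rightarrow> nat \<Rightarrow> 'a" where "e = (\<lambda>i j. if i = 0 \<and> j = 0 then (1::'a) else 0)"
    have eS: "e \<in> D" unfolding eqD e_def mat_space_def using s R by auto
    have zS: "(\<lambda>i j. 0) \<in> D" unfolding eqD by (rule zero_space)
    have ne: "e \<noteq> (\<lambda>i j. 0)" unfolding e_def by (metis one_neq_zero)
    have de: "(\<lambda>i j. e i j - 0) = e" by simp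
    have rw: "row_weight r (e i) \<le> (if i = 0 then 1 else 0)" for i
      by (rule rw_le) (auto simp: e_def split: if_splits)
    have "nrt_weight s r e \<le> (\<Sum>i<s. (if i = 0 then 1 else 0))"
      unfolding nrt_weight_def by (rule sum_mono) (rule rw)
    also have "\<dots> = 1" using s by simp
    finally have "nrt_dist s r e (\<lambda>i j. 0) \<le> R" using R unfolding nrt_dist_def de by simp
    hence "e \<in> nrt_ball s r (\<lambda>i j. 0) R" using eS eqD by (simp add: ball_iff)
    moreover have "e \<in> nrt_ball s r e R" using eS eqD
      by (simp add: ball_iff nrt_dist_def nrt_weight_def row_weight_def)
    ultimately show False using disj[OF eS zS ne] by blast
  qed
qed

theorem mainTheorem11:
  fixes s r h R :: nat
  assumes "2 \<le> s" and "0 < R" and "R \<le> r" and "0 < h"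
    and "Perf s r R \<noteq> ({} :: (nat \<Rightarrow> nat \<Rightarrow> 'a::{finite,field}) set set)"
  shows "(\<forall>f :: (nat \<Rightarrow> nat \<Rightarrow> 'a) \<Rightarrow> (nat \<Rightarrow> nat \<Rightarrow> 'a) set.
            (\<forall>c''\<in>mat_space s h. f c'' \<in> Perf s r R) \<longrightarrow> code_Cf s r h f \<in> Perf s (r + h) R)
       \<and> (\<forall>C\<in>(Perf s (r + h) R :: (nat \<Rightarrow> nat \<Rightarrow> 'a) set set).
            let f = (\<lambda>c''. {c' \<in> mat_space s r. mat_join r c' c'' \<in> C}) in
            (\<forall>c''\<in>mat_space s h. f c'' \<in> Perf s r R) \<and> C = code_Cf s r h f)"
proof (intro conjI allI impI ballI)
  note LL = L[OF assms(3)]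
  fix f :: "(nat \<Rightarrow> nat \<Rightarrow> 'a) \<Rightarrow> (nat \<Rightarrow> nat \<Rightarrow> 'a) set"
  assume F: "\<forall>c''\<in>mat_space s h. f c'' \<in> Perf s r R"
  have Fsub: "f b \<subseteq> mat_space s r" if "b \<in> mat_space s h" for b
    using F that unfolding Perf_def perfect_code_def by auto
  have Fdisj: "\<And>c c'. c \<in> f b \<Longrightarrow> c' \<in> f b \<Longrightarrow> c \<noteq> c' \<Longrightarrow> nrt_ball s r c R \<inter> nrt_ball s r c' R = {}"
    if "b \<in> mat_space s h" for b
    using F that unfolding Perf_def perfect_code_def by auto
  have Fcov: "(\<Union>c\<in>f b. nrt_ball s r c R) = mat_space s r" if "b \<in> mat_space s h" for b
    using F that unfolding Perf_def perfect_code_def by auto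
  have Fcard: "1 < card (f b)" "f b \<noteq> mat_space s r" if "b \<in> mat_space s h" for b
    using F that unfolding Perf_def by auto
  let ?C = "code_Cf s r h f"
  have memC: "x \<in> ?C \<longleftrightarrow> (\<exists>a b. x = mat_join r a b \<and> b \<in> mat_space s h \<and> a \<in> f b)" for x
    unfolding code_Cf_def by blast
  have Csub: "?C \<subseteq> mat_space s (r + h)"
    using Fsub join_space unfolding code_Cf_def by blast
  have Cdisj: "nrt_ball s (r + h) c R \<inter> nrt_ball s (r + h) c' R = {}"
    if c: "c \<in> ?C" and c': "c' \<in> ?C" and ne: "c \<noteq> c'" for c c'
  proof (rule ccontr)
    assume "nrt_ball s (r + h) c R \<inter> nrt_ball s (r + h) c' R \<noteq> {}"
    then obtain x where x1: "x \<in> nrt_ball s (r + h) c R" and x2: "x \<in> nrt_ball s (r + h) c' R" by blast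
    obtain a1 b1 where 1: "c = mat_join r a1 b1" "b1 \<in> mat_space s h" "a1 \<in> f b1" using c memC by blast
    obtain a2 b2 where 2: "c' = mat_join r a2 b2" "b2 \<in> mat_space s h" "a2 \<in> f b2" using c' memC by blast
    have xS: "x \<in> mat_space s (r + h)" using x1 by (simp add: ball_iff)
    note xe = split_space3[of x r]
    have d1: "nrt_dist s (r + h) (mat_join r (lft r x) (rgt r x)) (mat_join r a1 b1) \<le> R"
      using x1 1 xe by (simp add: ball_iff)
    have d2: "nrt_dist s (r + h) (mat_join r (lft r x) (rgt r x)) (mat_join r a2 b2) \<le> R"
      using x2 2 xe by (simp add: ball_iff)
    have e1: "rgt r x = b1" using d1 LL box_eq[OF split_space2[OF xS] 1(2)] by blast
    have e2: "rgt r x = b2" using d2 LL box_eq[OF split_space2[OF xS] 2(2)] by blast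
    have b12: "b1 = b2" using e1 e2 by simp
    have a12: "a1 \<noteq> a2" using ne 1 2 b12 by auto
    have "lft r x \<in> nrt_ball s r a1 R" using LL[THEN iffD1, OF d1] split_space1[OF xS] by (simp add: ball_iff)
    moreover have "lft r x \<in> nrt_ball s r a2 R" using LL[THEN iffD1, OF d2] split_space1[OF xS] by (simp add: ball_iff)
    ultimately show False using Fdisj[OF 1(2) 1(3) _ a12] 2(3) b12 by blast
  qed
  have Ccov: "(\<Union>c\<in>?C. nrt_ball s (r + h) c R) = mat_space s (r + h)"
  proof
    show "(\<Union>c\<in>?C. nrt_ball s (r + h) c R) \<subseteq> mat_space s (r + h)" by (auto simp: ball_iff)
  next
    show "mat_space s (r + h) \<subseteq> (\<Union>c\<in>?C. nrt_ball s (r + h) c R)"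
    proof
      fix x :: "nat \<Rightarrow> nat \<Rightarrow> 'a" assume xS: "x \<in> mat_space s (r + h)"
      have bS: "rgt r x \<in> mat_space s h" using split_space2[OF xS] .
      have "lft r x \<in> mat_space s r" using split_space1[OF xS] .
      then obtain a where a: "a \<in> f (rgt r x)" "lft r x \<in> nrt_ball s r a R"
        using Fcov[OF bS] by blast
      have "mat_join r a (rgt r x) \<in> ?C" using a bS memC by blast
      moreover have "nrt_dist s (r + h) (mat_join r (lft r x) (rgt r x)) (mat_join r a (rgt r x)) \<le> R"
        using a by (simp add: ball_iff LL)
      hence "x \<in> nrt_ball s (r + h) (mat_join r a (rgt r x)) R"
        using xS split_space3[of x r] by (simp add: ball_iff)
      ultimately show "x \<in> (\<Union>c\<in>?C. nrt_ball s (r + h) c R)" by blast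
    qed
  qed
  have z: "(\<lambda>i j. 0) \<in> mat_space s h" by (rule zero_space)
  let ?z = "\<lambda>i j. (0::'a)"
  have finz: "finite (f ?z)" using Fsub[OF z] finite_mat_space finite_subset by blast
  obtain a1 a2 where a: "a1 \<in> f ?z" "a2 \<in> f ?z" "a1 \<noteq> a2"
    using Fcard(1)[OF z] finz by (metis One_nat_def card_le_Suc0_iff_eq not_le)
  have "mat_join r a1 ?z \<noteq> mat_join r a2 ?z"
    using a Fsub[OF z] by (metis lft_join subsetD)
  moreover have "mat_join r a1 ?z \<in> ?C" "mat_join r a2 ?z \<in> ?C" using a z memC by blast+
  moreover have finC: "finite ?C" using Csub finite_mat_space finite_subset by blast
  ultimately have "card {mat_join r a1 ?z, mat_join r a2 ?z} \<le> card ?C"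
    by (intro card_mono) auto
  hence card: "1 < card ?C" using \<open>mat_join r a1 ?z \<noteq> mat_join r a2 ?z\<close> by simp
  obtain y where y: "y \<in> mat_space s r" "y \<notin> f ?z" using Fcard(2)[OF z] Fsub[OF z] by blast
  have "mat_join r y ?z \<notin> ?C"
  proof
    assume "mat_join r y ?z \<in> ?C"
    then obtain a b where ab: "mat_join r y ?z = mat_join r a b" "b \<in> mat_space s h" "a \<in> f b"
      using memC by blast
    have "b = ?z" using arg_cong[OF ab(1), of "rgt r"] by simp
    moreover have "a = y" using arg_cong[OF ab(1), of "lft r"] y(1) Fsub[OF ab(2)] ab(3)
      by (metis lft_join subsetD)
    ultimately show False using ab(3) y(2) by simp
  qed
  moreover have "mat_join r y ?z \<in> mat_space s (r + h)" using join_space[OF y(1) z] .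
  ultimately have "?C \<noteq> mat_space s (r + h)" by blast
  thus "?C \<in> Perf s (r + h) R"
    unfolding Perf_def perfect_code_def using Csub Cdisj Ccov card by blast
next
  note LL = L[OF assms(3)]
  fix C :: "(nat \<Rightarrow> nat \<Rightarrow> 'a) set"
  assume CP: "C \<in> Perf s (r + h) R"
  have Csub: "C \<subseteq> mat_space s (r + h)" and
    Cdisj: "\<And>c c'. c \<in> C \<Longrightarrow> c' \<in> C \<Longrightarrow> c \<noteq> c' \<Longrightarrow> nrt_ball s (r + h) c R \<inter> nrt_ball s (r + h) c' R = {}"
    and Ccov: "(\<Union>c\<in>C. nrt_ball s (r + h) c R) = mat_space s (r + h)"
    using CP unfolding Perf_def perfect_code_def by auto
  define f where "f = (\<lambda>c''. {c' \<in> mat_space s r. mat_join r c' c'' \<in> C})"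
  have fP: "f b \<in> Perf s r R" if bS: "b \<in> mat_space s h" for b
  proof -
    have sub: "f b \<subseteq> mat_space s r" unfolding f_def by auto
    have disj: "nrt_ball s r a1 R \<inter> nrt_ball s r a2 R = {}"
      if a1: "a1 \<in> f b" and a2: "a2 \<in> f b" and ne: "a1 \<noteq> a2" for a1 a2
    proof (rule ccontr)
      assume "nrt_ball s r a1 R \<inter> nrt_ball s r a2 R \<noteq> {}"
      then obtain x where x1: "x \<in> nrt_ball s r a1 R" and x2: "x \<in> nrt_ball s r a2 R" by blast
      have xS: "x \<in> mat_space s r" using x1 by (simp add: ball_iff)
      have "mat_join r x b \<in> nrt_ball s (r + h) (mat_join r a1 b) R"
        using x1 join_space[OF xS bS] by (simp add: ball_iff LL)
      moreover have "mat_join r x b \<in> nrt_ball s (r + h) (mat_join r a2 b) R"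
        using x2 join_space[OF xS bS] by (simp add: ball_iff LL)
      moreover have "mat_join r a1 b \<noteq> mat_join r a2 b"
        using ne a1 a2 unfolding f_def by (metis (mono_tags, lifting) lft_join mem_Collect_eq)
      moreover have "mat_join r a1 b \<in> C" "mat_join r a2 b \<in> C" using a1 a2 unfolding f_def by auto
      ultimately show False using Cdisj by blast
    qed
    have cov: "(\<Union>c\<in>f b. nrt_ball s r c R) = mat_space s r"
    proof
      show "(\<Union>c\<in>f b. nrt_ball s r c R) \<subseteq> mat_space s r" by (auto simp: ball_iff)
    next
      show "mat_space s r \<subseteq> (\<Union>c\<in>f b. nrt_ball s r c R)"
      proof
        fix x :: "nat \<Rightarrow> nat \<Rightarrow> 'a" assume xS: "x \<in> mat_space s r"
        have "mat_join r x b \<in> mat_space s (r + h)" using join_space[OF xS bS] .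
        then obtain c where c: "c \<in> C" "mat_join r x b \<in> nrt_ball s (r + h) c R" using Ccov by blast
        have cS: "c \<in> mat_space s (r + h)" using c Csub by auto
        have d: "nrt_dist s (r + h) (mat_join r x b) (mat_join r (lft r c) (rgt r c)) \<le> R"
          using c(2) split_space3[of c r] by (simp add: ball_iff)
        have "rgt r c = b" using d LL box_eq[OF split_space2[OF cS] bS] by (metis (no_types))
        hence cj: "c = mat_join r (lft r c) b" using split_space3[of c r] by simp
        have "lft r c \<in> f b" using cj c(1) split_space1[OF cS] unfolding f_def by auto
        moreover have "x \<in> nrt_ball s r (lft r c) R" using LL[THEN iffD1, OF d] xS by (simp add: ball_iff)
        ultimately show "x \<in> (\<Union>c\<in>f b. nrt_ball s r c R)" by blast
      qed
    qed
    have pc: "perfect_code s r R (f b)" unfolding perfect_code_def using sub disj cov by blast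
    show ?thesis unfolding Perf_def using pc nontriv[OF pc assms(1,2,3)] by blast
  qed
  have "C = code_Cf s r h f"
  proof
    show "code_Cf s r h f \<subseteq> C" unfolding code_Cf_def f_def by auto
  next
    show "C \<subseteq> code_Cf s r h f"
    proof
      fix c assume c: "c \<in> C"
      hence cS: "c \<in> mat_space s (r + h)" using Csub by auto
      have "lft r c \<in> f (rgt r c)" unfolding f_def
        using split_space1[OF cS] split_space3[of c r] c by auto
      thus "c \<in> code_Cf s r h f" unfolding code_Cf_def
        using split_space2[OF cS] split_space3[of c r] by blast
    qed
  qed
  thus "let f = (\<lambda>c''. {c' \<in> mat_space s r. mat_join r c' c'' \<in> C}) in
            (\<forall>c''\<in>mat_space s h. f c'' \<in> Perf s r R) \<and> C = code_Cf s r h f"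
    using fP unfolding f_def Let_def by blast
qed
end
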